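(* Let $\boldsymbol{x}=\boldsymbol{H}\boldsymbol{y}+\boldsymbol{n}$, where $\boldsymbol{H}$ is a fixed matrix, $\boldsymbol{y}$ is drawn from a (fictitious) prior, and $\boldsymbol{n}$ is a zero-mean random vector with covariance $\boldsymbol{\Sigma}_n$, independent of $\boldsymbol{y}$. Consider linear estimators $\hat{\boldsymbol{y}}=\boldsymbol{A}\boldsymbol{x}$ and, for $\lambda\ge 0$, the linear BCE defined (in the limit $N,M\to\infty$ of infinitely many training samples) as the minimizer over $\boldsymbol{A}$ of $$\mathrm{E}\big[\|\boldsymbol{A}\boldsymbol{x}-\boldsymbol{y}\|^2\big]+\lambda\,\mathrm{E}\Big[\big\|\mathrm{E}[\boldsymbol{A}\boldsymbol{x}-\boldsymbol{y}\mid\boldsymbol{y}]\big\|^2\Big],$$ all expectations over $\boldsymbol{y}$ being with respect to the fictitious prior. Let $\mathbf{R}=\mathrm{E}\big[\mathrm{E}[\boldsymbol{x}\mid\boldsymbol{y}]\,\mathrm{E}[\boldsymbol{x}^T\mid\boldsymbol{y}]\big]$ and $\boldsymbol{\Sigma}_{\boldsymbol{y}}=\mathrm{E}[\boldsymbol{y}\boldsymbol{y}^T]$, and assume all matrices being inverted below are invertible. Then the linear BCE is $$\boldsymbol{A}=\mathrm{E}[\boldsymbol{y}\boldsymbol{x}^T]\Big(\tfrac{1}{\lambda+1}\mathrm{E}[\boldsymbol{x}\boldsymbol{x}^T]+\tfrac{\lambda}{\lambda+1}\mathbf{R}\Big)^{-1}=\Big(\boldsymbol{H}^T\boldsymbol{\Sigma}_n^{-1}\boldsymbol{H}+\tfrac{1}{\lambda+1}\boldsymbol{\Sigma}_{\boldsymbol{y}}^{-1}\Big)^{-1}\boldsymbol{H}^T\boldsymbol{\Sigma}_n^{-1}.$$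 *)

theory Defs
  imports "HOL-Probability.Probability"
begin

definition outer :: "real^'n \<Rightarrow> real^'k \<Rightarrow> real^'k^'n" where
  "outer u v = (\<chi> i j. u $ i * v $ j)"

definition mat_expectation :: "'a measure \<Rightarrow> ('a \<Rightarrow> real^'k^'n) \<Rightarrow> real^'k^'n" where
  "mat_expectation M F = (\<chi> i j. integral\<^sup>L M (\<lambda>w. F w $ i $ j))"

definition gen_sigma :: "'a measure \<Rightarrow> ('a \<Rightarrow> 'b::topological_space) \<Rightarrow> 'a measure" where
  "gen_sigma M y = vimage_algebra (space M) y borel"

definition vec_cond_exp :: "'a measure \<Rightarrow> ('a \<Rightarrow> 'b::topological_space) \<Rightarrow> ('a \<Rightarrow> real^'n) \<Rightarrow> 'a \<Rightarrow> real^'n" where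
  "vec_cond_exp M y f w = (\<chi> i. real_cond_exp M (gen_sigma M y) (\<lambda>v. f v $ i) w)"

definition bce_objective ::
  "'a measure \<Rightarrow> real \<Rightarrow> ('a \<Rightarrow> real^'d) \<Rightarrow> ('a \<Rightarrow> real^'m) \<Rightarrow> real^'m^'d \<Rightarrow> real" where
  "bce_objective M lam y x A =
     integral\<^sup>L M (\<lambda>w. (norm (A *v x w - y w))\<^sup>2)
     + lam * integral\<^sup>L M (\<lambda>w. (norm (vec_cond_exp M y (\<lambda>v. A *v x v - y v) w))\<^sup>2)"

end

theory Submission
  imports Defs
begin


lemma minv: assumes "invertible (A::real^'n^'m)"
  shows "A ** matrix_inv A = mat 1" "matrix_inv A ** A = mat 1"
proof -
  obtain A' where "A ** A' = mat 1 \<and> A' ** A = mat 1" using assms unfolding invertible_def by blast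
  then have "A ** matrix_inv A = mat 1 \<and> matrix_inv A ** A = mat 1"
    unfolding matrix_inv_def by (rule someI[where P="\<lambda>A'. A ** A' = mat 1 \<and> A' ** A = mat 1"])
  then show "A ** matrix_inv A = mat 1" "matrix_inv A ** A = mat 1" by auto
qed

definition L2 :: "'a measure \<Rightarrow> ('a \<Rightarrow> real) \<Rightarrow> bool" where
  "L2 M f \<longleftrightarrow> f \<in> borel_measurable M \<and> integrable M (\<lambda>w. (f w)\<^sup>2)"

lemma L2_mult: assumes "L2 M f" "L2 M g" shows "integrable M (\<lambda>w. f w * g w)"
proof -
  have [measurable]: "f \<in> borel_measurable M" "g \<in> borel_measurable M" using assms L2_def by auto
  have int: "integrable M (\<lambda>w. (f w)\<^sup>2 + (g w)\<^sup>2)" using assms unfolding L2_def by (intro Bochner_Integration.integrable_add) auto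
  have bnd: "norm (f w * g w) \<le> norm ((f w)\<^sup>2 + (g w)\<^sup>2)" for w
  proof -
    have "2 * \<bar>f w\<bar> * \<bar>g w\<bar> \<le> (f w)\<^sup>2 + (g w)\<^sup>2"
      using sum_squares_bound[of "\<bar>f w\<bar>" "\<bar>g w\<bar>"] by simp
    moreover have "0 \<le> \<bar>f w\<bar> * \<bar>g w\<bar>" by simp
    ultimately have "\<bar>f w\<bar> * \<bar>g w\<bar> \<le> (f w)\<^sup>2 + (g w)\<^sup>2" by linarith
    then show ?thesis by (simp add: abs_mult)
  qed
  show ?thesis
  proof (rule Bochner_Integration.integrable_bound[OF int])
    show "(\<lambda>w. f w * g w) \<in> borel_measurable M" by measurable
    show "AE w in M. norm (f w * g w) \<le> norm ((f w)\<^sup>2 + (g w)\<^sup>2)" using bnd by simp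
  qed
qed

lemma L2_add: assumes "L2 M f" "L2 M g" shows "L2 M (\<lambda>w. f w + g w)"
proof -
  have "integrable M (\<lambda>w. (f w)\<^sup>2 + (g w)\<^sup>2 + 2 * (f w * g w))"
    using assms L2_mult[OF assms] unfolding L2_def by (intro Bochner_Integration.integrable_add) auto
  then show ?thesis using assms unfolding L2_def by (auto simp add: power2_sum mult.assoc)
qed

lemma L2_cmult: assumes "L2 M f" shows "L2 M (\<lambda>w. c * f w)"
  using assms unfolding L2_def by (auto simp add: power_mult_distrib)

lemma L2_zero: "L2 M (\<lambda>w. 0)" unfolding L2_def by simp

lemma L2_sum: assumes "\<And>i. i \<in> I \<Longrightarrow> L2 M (f i)" shows "L2 M (\<lambda>w. \<Sum>i\<in>I. f i w)"
  using assms
proof (induction I rule: infinite_finite_induct)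
  case (insert x F) then show ?case by (simp add: L2_add)
qed (auto simp: L2_zero)

lemma L2_diff: assumes "L2 M f" "L2 M g" shows "L2 M (\<lambda>w. f w - g w)"
  using L2_add[OF assms(1) L2_cmult[OF assms(2), of "-1"]] by simp

lemma (in prob_space) L2_integrable: "L2 M f \<Longrightarrow> integrable M f"
  unfolding L2_def by (auto intro: square_integrable_imp_integrable)

definition vL2 :: "'a measure \<Rightarrow> ('a \<Rightarrow> real^'n) \<Rightarrow> bool" where
  "vL2 M u \<longleftrightarrow> (\<forall>i. L2 M (\<lambda>w. u w $ i))"

lemma vL2_add: "vL2 M u \<Longrightarrow> vL2 M v \<Longrightarrow> vL2 M (\<lambda>w. u w + v w)"
  unfolding vL2_def by (auto intro: L2_add)
lemma vL2_diff: "vL2 M u \<Longrightarrow> vL2 M v \<Longrightarrow> vL2 M (\<lambda>w. u w - v w)"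
  unfolding vL2_def by (auto intro: L2_diff)
lemma vL2_mv: "vL2 M u \<Longrightarrow> vL2 M (\<lambda>w. K *v u w)"
  unfolding vL2_def matrix_vector_mult_def by (auto intro!: L2_sum L2_cmult)

definition mom :: "'a measure \<Rightarrow> ('a \<Rightarrow> real^'n) \<Rightarrow> ('a \<Rightarrow> real^'k) \<Rightarrow> real^'k^'n" where
  "mom M u v = mat_expectation M (\<lambda>w. outer (u w) (v w))"

lemma mom_nth: "mom M u v $ i $ j = integral\<^sup>L M (\<lambda>w. u w $ i * v w $ j)"
  unfolding mom_def mat_expectation_def outer_def by simp

lemma mom_mv_left: assumes "vL2 M u" "vL2 M v"
  shows "mom M (\<lambda>w. K *v u w) v = K ** mom M u v"
proof -
  have "integral\<^sup>L M (\<lambda>w. (\<Sum>k\<in>UNIV. K $ i $ k * u w $ k) * v w $ j)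
       = (\<Sum>k\<in>UNIV. K $ i $ k * integral\<^sup>L M (\<lambda>w. u w $ k * v w $ j))" for i j
    using assms unfolding vL2_def
    by (simp add: sum_distrib_right mult.assoc L2_mult)
  then show ?thesis
    by (simp add: vec_eq_iff mom_nth matrix_matrix_mult_def matrix_vector_mult_def)
qed

lemma mom_mv_right: assumes "vL2 M u" "vL2 M v"
  shows "mom M u (\<lambda>w. K *v v w) = mom M u v ** transpose K"
proof -
  have "integral\<^sup>L M (\<lambda>w. u w $ i * (\<Sum>k\<in>UNIV. K $ j $ k * v w $ k))
       = (\<Sum>k\<in>UNIV. integral\<^sup>L M (\<lambda>w. u w $ i * v w $ k) * K $ j $ k)" for i j
  proof -
    have "(\<lambda>w. u w $ i * (\<Sum>k\<in>UNIV. K $ j $ k * v w $ k)) = (\<lambda>w. \<Sum>k\<in>UNIV. K $ j $ k * (u w $ i * v w $ k))"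
      by (simp add: sum_distrib_left mult_ac)
    then show ?thesis using assms unfolding vL2_def
      by (simp add: L2_mult mult.commute)
  qed
  then show ?thesis
    by (simp add: vec_eq_iff mom_nth matrix_matrix_mult_def matrix_vector_mult_def transpose_def)
qed

lemma mom_add_left: assumes "vL2 M u" "vL2 M u'" "vL2 M v"
  shows "mom M (\<lambda>w. u w + u' w) v = mom M u v + mom M u' v"
  using assms unfolding vL2_def
  by (simp add: vec_eq_iff mom_nth distrib_right L2_mult)

lemma mom_add_right: assumes "vL2 M u" "vL2 M v" "vL2 M v'"
  shows "mom M u (\<lambda>w. v w + v' w) = mom M u v + mom M u v'"
  using assms unfolding vL2_def
  by (simp add: vec_eq_iff mom_nth distrib_left L2_mult)

lemma mom_diff_left: assumes "vL2 M u" "vL2 M u'" "vL2 M v"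
  shows "mom M (\<lambda>w. u w - u' w) v = mom M u v - mom M u' v"
  using assms unfolding vL2_def
  by (simp add: vec_eq_iff mom_nth left_diff_distrib L2_mult)

definition ip :: "'a measure \<Rightarrow> ('a \<Rightarrow> real^'n) \<Rightarrow> ('a \<Rightarrow> real^'n) \<Rightarrow> real" where
  "ip M u v = integral\<^sup>L M (\<lambda>w. inner (u w) (v w))"

lemma ip_integrable: "vL2 M u \<Longrightarrow> vL2 M v \<Longrightarrow> integrable M (\<lambda>w. inner (u w) (v w))"
  unfolding vL2_def inner_vec_def by (auto intro!: L2_mult)

lemma ip_mom: assumes "vL2 M u" "vL2 M v" shows "ip M u v = (\<Sum>i\<in>UNIV. mom M u v $ i $ i)"
  using assms unfolding ip_def inner_vec_def vL2_def
  by (simp add: mom_nth L2_mult)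



lemma gen_sigma_space[simp]: "space (gen_sigma M f) = space M"
  unfolding gen_sigma_def by simp

lemma subalg_gen: assumes "f \<in> borel_measurable M" shows "subalgebra M (gen_sigma M f)"
  unfolding subalgebra_def gen_sigma_def using sets_image_in_sets[OF _ assms] by auto

lemma meas_gen: assumes "\<phi> \<in> borel_measurable borel"
  shows "(\<lambda>w. \<phi> (f w)) \<in> borel_measurable (gen_sigma M f)"
proof -
  have "f \<in> measurable (gen_sigma M f) borel"
    unfolding gen_sigma_def by (rule measurable_vimage_algebra1) auto
  then show ?thesis using assms by (rule measurable_compose)
qed

lemma meas_nth: "(\<lambda>v::real^'n. v $ i) \<in> borel_measurable borel"
  by (rule borel_measurable_continuous_onI) (intro continuous_intros)

lemma meas_lin: fixes A :: "real^'n^'m" shows "(\<lambda>v. (A *v v) $ i) \<in> borel_measurable borel"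
proof -
  have "(\<lambda>v. (A *v v) $ i) = (\<lambda>v. \<Sum>j\<in>UNIV. A $ i $ j * v $ j)"
    by (simp add: matrix_vector_mult_def)
  moreover have "(\<lambda>v::real^_. \<Sum>j\<in>UNIV. A $ i $ j * v $ j) \<in> borel_measurable borel"
    by (rule borel_measurable_continuous_onI) (intro continuous_intros)
  ultimately show ?thesis by simp
qed

lemma (in prob_space) sfs_gen: assumes "f \<in> borel_measurable M"
  shows "sigma_finite_subalgebra M (gen_sigma M f)"
proof -
  have "finite_measure_subalgebra M (gen_sigma M f)"
    unfolding finite_measure_subalgebra_def finite_measure_subalgebra_axioms_def
    using subalg_gen[OF assms] finite_measure_axioms by auto
  then show ?thesis by (rule finite_measure_subalgebra_is_sigma_finite)
qed

lemma (in prob_space) indep_int: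
  assumes ind: "indep_set (sets (gen_sigma M y)) (sets (gen_sigma M n))"
    and ym: "y \<in> borel_measurable M" and nm: "n \<in> borel_measurable M"
    and X: "X \<in> borel_measurable (gen_sigma M y)" and Y: "Y \<in> borel_measurable (gen_sigma M n)"
    and iX: "integrable M X" and iY: "integrable M (Y::'a \<Rightarrow> real)"
  shows "integral\<^sup>L M (\<lambda>w. X w * Y w) = integral\<^sup>L M X * integral\<^sup>L M Y"
proof -
  have s1: "sigma_sets (space M) {X -` A \<inter> space M | A. A \<in> sets borel} \<subseteq> sets (gen_sigma M y)"
  proof -
    have "{X -` A \<inter> space M | A. A \<in> sets borel} \<subseteq> sets (gen_sigma M y)"
      using measurable_sets[OF X] by auto
    then have "sigma_sets (space (gen_sigma M y)) {X -` A \<inter> space M | A. A \<in> sets borel} \<subseteq> sets (gen_sigma M y)"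
      by (rule sets.sigma_sets_subset)
    then show ?thesis by simp
  qed
  have s2: "sigma_sets (space M) {Y -` A \<inter> space M | A. A \<in> sets borel} \<subseteq> sets (gen_sigma M n)"
  proof -
    have "{Y -` A \<inter> space M | A. A \<in> sets borel} \<subseteq> sets (gen_sigma M n)"
      using measurable_sets[OF Y] by auto
    then have "sigma_sets (space (gen_sigma M n)) {Y -` A \<inter> space M | A. A \<in> sets borel} \<subseteq> sets (gen_sigma M n)"
      by (rule sets.sigma_sets_subset)
    then show ?thesis by simp
  qed
  have rX: "random_variable borel X" by (rule measurable_from_subalg[OF subalg_gen[OF ym] X])
  have rY: "random_variable borel Y" by (rule measurable_from_subalg[OF subalg_gen[OF nm] Y])
  have "indep_set (sigma_sets (space M) {X -` A \<inter> space M | A. A \<in> sets borel})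
                  (sigma_sets (space M) {Y -` A \<inter> space M | A. A \<in> sets borel})"
    using ind s1 s2 unfolding indep_sets2_eq by blast
  then have "indep_var borel X borel Y"
    unfolding indep_var_eq using rX rY by blast
  then show ?thesis using iX iY by (rule indep_var_lebesgue_integral)
qed



lemma ip_expand: assumes "vL2 M a" "vL2 M b"
  shows "ip M (\<lambda>w. a w + b w) (\<lambda>w. a w + b w) = ip M a a + 2 * ip M a b + ip M b b"
proof -
  have "(\<lambda>w. inner (a w + b w) (a w + b w)) = (\<lambda>w. inner (a w) (a w) + 2 * inner (a w) (b w) + inner (b w) (b w))"
    by (rule ext) (simp add: inner_add_left inner_add_right inner_commute algebra_simps)
  then show ?thesis unfolding ip_def using ip_integrable[OF assms(1) assms(1)] ip_integrable[OF assms(1) assms(2)]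
     ip_integrable[OF assms(2) assms(2)] by simp
qed

lemma ip_mv: assumes "vL2 M a" "vL2 M b"
  shows "ip M a (\<lambda>w. D *v b w) = (\<Sum>i\<in>UNIV. \<Sum>j\<in>UNIV. D $ i $ j * mom M a b $ i $ j)"
  using assms
  by (simp add: ip_mom vL2_mv mom_mv_right matrix_matrix_mult_def transpose_def mult.commute)

lemma ip_nonneg: "ip M a a \<ge> 0"
  unfolding ip_def by (simp add: integral_nonneg_AE)

lemma ip_zero: assumes "vL2 M a" "vL2 M v" "ip M a a = 0" shows "mom M a v = 0"
proof -
  have "AE w in M. inner (a w) (a w) = 0"
    using assms(3) integral_nonneg_eq_0_iff_AE[OF ip_integrable[OF assms(1) assms(1)]]
    unfolding ip_def by simp
  then have "AE w in M. a w = 0" by (auto elim: eventually_mono)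
  then have "AE w in M. a w $ i * v w $ j = 0" for i j by (auto elim: eventually_mono)
  then show ?thesis by (simp add: vec_eq_iff mom_nth integral_eq_zero_AE)
qed

locale bce =
  fixes M :: "'a measure" and H :: "real^'d^'m"
    and y :: "'a \<Rightarrow> real^'d" and n :: "'a \<Rightarrow> real^'m"
  assumes P: "prob_space M"
    and ym: "y \<in> borel_measurable M" and nm: "n \<in> borel_measurable M"
    and ind: "prob_space.indep_set M (sets (gen_sigma M y)) (sets (gen_sigma M n))"
    and y2: "integrable M (\<lambda>w. (norm (y w))\<^sup>2)"
    and n2: "integrable M (\<lambda>w. (norm (n w))\<^sup>2)"
    and n0: "\<forall>i. integral\<^sup>L M (\<lambda>w. n w $ i) = 0"
begin

lemma vL2_gen: assumes "f \<in> borel_measurable M" "integrable M (\<lambda>w. (norm (f w))\<^sup>2)"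
  shows "vL2 M (f :: 'a \<Rightarrow> real^'k)"
  unfolding vL2_def L2_def
proof
  fix i
  have m: "(\<lambda>w. f w $ i) \<in> borel_measurable M" using measurable_compose[OF assms(1) meas_nth] .
  moreover have "integrable M (\<lambda>w. (f w $ i)\<^sup>2)"
  proof (rule Bochner_Integration.integrable_bound[OF assms(2)])
    show "(\<lambda>w. (f w $ i)\<^sup>2) \<in> borel_measurable M" using m by measurable
    show "AE w in M. norm ((f w $ i)\<^sup>2) \<le> norm ((norm (f w))\<^sup>2)"
    proof (rule AE_I2)
      fix w
      have "(f w $ i)\<^sup>2 \<le> (norm (f w))\<^sup>2"
        using component_le_norm_cart[of "f w" i] abs_le_square_iff[of "f w $ i" "norm (f w)"] by simp
      then show "norm ((f w $ i)\<^sup>2) \<le> norm ((norm (f w))\<^sup>2)" by simp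
    qed
  qed
  ultimately show "(\<lambda>w. f w $ i) \<in> borel_measurable M \<and> integrable M (\<lambda>w. (f w $ i)\<^sup>2)" by simp
qed

lemma vL2_y: "vL2 M y" using vL2_gen[OF ym y2] .
lemma vL2_n: "vL2 M n" using vL2_gen[OF nm n2] .

lemma CE:
  assumes g: "g \<in> borel_measurable (gen_sigma M y)" "integrable M g"
    and h: "h \<in> borel_measurable (gen_sigma M n)" "integrable M h" "integral\<^sup>L M h = 0"
  shows "AE w in M. real_cond_exp M (gen_sigma M y) (\<lambda>w. g w + h w) w = g w"
proof -
  interpret prob_space M by (rule P)
  interpret S: sigma_finite_subalgebra M "gen_sigma M y" by (rule sfs_gen[OF ym])
  show ?thesis
  proof (rule S.real_cond_exp_charact)
    fix A assume A: "A \<in> sets (gen_sigma M y)"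
    have AM: "A \<in> sets M" using S.subalg A unfolding subalgebra_def by auto
    have "integral\<^sup>L M (\<lambda>w. indicator A w * h w) = integral\<^sup>L M (indicator A) * integral\<^sup>L M h"
    proof (rule indep_int[OF ind ym nm])
      show "indicator A \<in> borel_measurable (gen_sigma M y)" using A by simp
      show "integrable M (indicator A :: _ \<Rightarrow> real)"
        by (rule integrable_real_indicator[OF AM]) (simp add: less_top[symmetric])
    qed (use h in auto)
    then have hz: "integral\<^sup>L M (\<lambda>w. indicator A w * h w) = 0" using h(3) by simp
    have "(\<integral>x\<in>A. (g x + h x) \<partial>M) = integral\<^sup>L M (\<lambda>w. indicator A w * g w + indicator A w * h w)"
      unfolding set_lebesgue_integral_def by (simp add: distrib_left)
    also have "\<dots> = integral\<^sup>L M (\<lambda>w. indicator A w * g w) + integral\<^sup>L M (\<lambda>w. indicator A w * h w)"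
      using integrable_mult_indicator[OF AM g(2)] integrable_mult_indicator[OF AM h(2)] by simp
    also have "\<dots> = (\<integral>x\<in>A. g x \<partial>M)" using hz unfolding set_lebesgue_integral_def by simp
    finally show "(\<integral>x\<in>A. (g x + h x) \<partial>M) = (\<integral>x\<in>A. g x \<partial>M)" .
  qed (use g h in auto)
qed

lemma VCE:
  assumes "\<forall>i. (\<lambda>w. G w $ i) \<in> borel_measurable (gen_sigma M y)" "vL2 M G"
    "\<forall>i. (\<lambda>w. N w $ i) \<in> borel_measurable (gen_sigma M n)" "vL2 M N"
    "\<forall>i. integral\<^sup>L M (\<lambda>w. N w $ i) = 0"
  shows "AE w in M. vec_cond_exp M y (\<lambda>w. G w + N w) w = (G w :: real^'k)"
proof -
  interpret prob_space M by (rule P)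
  have "AE w in M. real_cond_exp M (gen_sigma M y) (\<lambda>v. (G v + N v) $ i) w = G w $ i" for i
    using CE[of "\<lambda>w. G w $ i" "\<lambda>w. N w $ i"] assms L2_integrable unfolding vL2_def by auto
  then have "AE w in M. \<forall>i\<in>UNIV. real_cond_exp M (gen_sigma M y) (\<lambda>v. (G v + N v) $ i) w = G w $ i"
    by (intro AE_finite_allI) auto
  then show ?thesis by (auto simp: vec_cond_exp_def vec_eq_iff elim!: eventually_mono)
qed

lemma mom_yn: "mom M y n = 0"
proof -
  interpret prob_space M by (rule P)
  have "integral\<^sup>L M (\<lambda>w. y w $ i * n w $ j) = integral\<^sup>L M (\<lambda>w. y w $ i) * integral\<^sup>L M (\<lambda>w. n w $ j)" for i j
    by (rule indep_int[OF ind ym nm]) (use vL2_y vL2_n in \<open>auto simp: vL2_def L2_integrable intro!: meas_gen[OF meas_nth]\<close>)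
  then show ?thesis using n0 by (simp add: vec_eq_iff mom_nth)
qed

lemma mom_ny: "mom M n y = 0"
  using mom_yn by (simp add: vec_eq_iff mom_nth mult.commute)

end


lemma matrix_add_rdistrib': "((A::real^'n^'m) + B) ** C = A ** C + B ** C"
  by (simp add: matrix_matrix_mult_def vec_eq_iff sum.distrib distrib_right)

lemma mat_scale_left: "(k *\<^sub>R (A::real^'n^'m)) ** B = k *\<^sub>R (A ** B)"
  by (simp add: scalar_matrix_assoc)

lemma mat_scale_right: "(A::real^'n^'m) ** (k *\<^sub>R B) = k *\<^sub>R (A ** B)"
  by (simp add: matrix_scalar_ac scalar_matrix_assoc)

lemma push:
  fixes H :: "real^'d^'m" and Sy :: "real^'d^'d" and Sn :: "real^'m^'m"
  assumes iSn: "invertible Sn" and iSy: "invertible Sy" and iMc: "invertible Mc" and iK: "invertible K"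
    and Mc: "Mc = H ** Sy ** transpose H + c *\<^sub>R Sn"
    and K: "K = transpose H ** matrix_inv Sn ** H + c *\<^sub>R matrix_inv Sy"
  shows "(Sy ** transpose H) ** matrix_inv Mc = matrix_inv K ** transpose H ** matrix_inv Sn"
proof -
  have "K ** (Sy ** transpose H) = transpose H ** matrix_inv Sn ** (H ** Sy ** transpose H) + c *\<^sub>R transpose H"
    unfolding K matrix_add_rdistrib' mat_scale_left
    by (simp add: matrix_mul_assoc minv[OF iSy])
  also have "\<dots> = transpose H ** matrix_inv Sn ** Mc"
    unfolding Mc matrix_add_ldistrib mat_scale_right
    by (simp add: matrix_mul_assoc[symmetric] minv[OF iSn])
  finally have KS: "K ** (Sy ** transpose H) = transpose H ** matrix_inv Sn ** Mc" .
  have "(Sy ** transpose H) ** matrix_inv Mc = (matrix_inv K ** K) ** (Sy ** transpose H) ** matrix_inv Mc"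
    by (simp add: minv[OF iK])
  also have "\<dots> = matrix_inv K ** (K ** (Sy ** transpose H)) ** matrix_inv Mc"
    by (simp add: matrix_mul_assoc)
  also have "\<dots> = matrix_inv K ** transpose H ** matrix_inv Sn ** (Mc ** matrix_inv Mc)"
    unfolding KS by (simp add: matrix_mul_assoc)
  also have "\<dots> = matrix_inv K ** transpose H ** matrix_inv Sn"
    by (simp add: minv[OF iMc])
  finally show ?thesis .
qed

lemma bracket0:
  fixes S :: "real^'m^'d" and Sx Sz :: "real^'m^'m"
  assumes iMc: "invertible Mc" and Mc: "Mc = (1/(lam+1)) *\<^sub>R Sx + (lam/(lam+1)) *\<^sub>R Sz" and lam: "lam \<ge> 0"
  shows "((S ** matrix_inv Mc) ** Sx - S) + lam *\<^sub>R ((S ** matrix_inv Mc) ** Sz - S) = 0"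
proof -
  let ?A = "S ** matrix_inv Mc"
  have "Sx + lam *\<^sub>R Sz = (lam+1) *\<^sub>R Mc" using lam unfolding Mc
    by (simp add: scaleR_add_right)
  then have "?A ** Sx + lam *\<^sub>R (?A ** Sz) = (lam+1) *\<^sub>R (?A ** Mc)"
    by (metis matrix_add_ldistrib mat_scale_right)
  also have "?A ** Mc = S" by (simp add: matrix_mul_assoc[symmetric] minv[OF iMc])
  finally have "?A ** Sx + lam *\<^sub>R (?A ** Sz) = (lam+1) *\<^sub>R S" .
  then show ?thesis by (simp add: algebra_simps)
qed

lemma D_zero:
  fixes D :: "real^'m^'d" and Sx Sz :: "real^'m^'m"
  assumes iMc: "invertible Mc" and Mc: "Mc = (1/(lam+1)) *\<^sub>R Sx + (lam/(lam+1)) *\<^sub>R Sz"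
    and "D ** Sx = 0" and "lam = 0 \<or> D ** Sz = 0"
  shows "D = 0"
proof -
  have "D ** Mc = 0" using assms(3,4) unfolding Mc matrix_add_ldistrib mat_scale_right by auto
  then have "D ** Mc ** matrix_inv Mc = 0" by (simp add: matrix_matrix_mult_def vec_eq_iff)
  then show ?thesis by (simp add: matrix_mul_assoc[symmetric] minv[OF iMc])
qed



context bce begin

lemma vL2_z: "vL2 M (\<lambda>w. H *v y w)" using vL2_mv[OF vL2_y] .
lemma vL2_x: "vL2 M (\<lambda>w. H *v y w + n w)" using vL2_add[OF vL2_z vL2_n] .

lemma Sz: "mom M (\<lambda>w. H *v y w) (\<lambda>w. H *v y w) = H ** mom M y y ** transpose H"
  by (simp add: mom_mv_left mom_mv_right vL2_y vL2_z matrix_mul_assoc)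

lemma Syz: "mom M y (\<lambda>w. H *v y w) = mom M y y ** transpose H"
  by (simp add: mom_mv_right vL2_y)

lemma Syx: "mom M y (\<lambda>w. H *v y w + n w) = mom M y y ** transpose H"
  by (simp add: mom_add_right vL2_y vL2_z vL2_n Syz mom_yn)

lemma Sx: "mom M (\<lambda>w. H *v y w + n w) (\<lambda>w. H *v y w + n w) = H ** mom M y y ** transpose H + mom M n n"
proof -
  have zn: "mom M (\<lambda>w. H *v y w) n = 0" by (simp add: mom_mv_left vL2_y vL2_n mom_yn)
  have nz: "mom M n (\<lambda>w. H *v y w) = 0" by (simp add: mom_mv_right vL2_y vL2_n mom_ny)
  show ?thesis
    by (simp add: mom_add_left mom_add_right vL2_x vL2_z vL2_n zn nz Sz)
qed

lemma vce_comp_meas: "(\<lambda>w. vec_cond_exp M y X w $ i) \<in> borel_measurable M"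
  by (simp add: vec_cond_exp_def)

lemma vce_x: "AE w in M. vec_cond_exp M y (\<lambda>v. H *v y v + n v) w = H *v y w"
  by (rule VCE) (auto simp: vL2_z vL2_n n0 intro!: meas_gen[OF meas_lin] meas_gen[OF meas_nth])

lemma R: "mat_expectation M (\<lambda>w. outer (vec_cond_exp M y (\<lambda>v. H *v y v + n v) w) (vec_cond_exp M y (\<lambda>v. H *v y v + n v) w))
   = mom M (\<lambda>w. H *v y w) (\<lambda>w. H *v y w)"
proof -
  have "integral\<^sup>L M (\<lambda>w. vec_cond_exp M y (\<lambda>v. H *v y v + n v) w $ i * vec_cond_exp M y (\<lambda>v. H *v y v + n v) w $ j)
      = integral\<^sup>L M (\<lambda>w. (H *v y w) $ i * (H *v y w) $ j)" for i j
  proof (rule integral_cong_AE)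
    show "(\<lambda>w. vec_cond_exp M y (\<lambda>v. H *v y v + n v) w $ i * vec_cond_exp M y (\<lambda>v. H *v y v + n v) w $ j) \<in> borel_measurable M"
      using vce_comp_meas by measurable
    have zi: "\<And>i. (\<lambda>w. (H *v y w) $ i) \<in> borel_measurable M" using vL2_z unfolding vL2_def L2_def by blast
    show "(\<lambda>w. (H *v y w) $ i * (H *v y w) $ j) \<in> borel_measurable M"
      using zi by (intro borel_measurable_times)
    show "AE w in M. vec_cond_exp M y (\<lambda>v. H *v y v + n v) w $ i * vec_cond_exp M y (\<lambda>v. H *v y v + n v) w $ j
        = (H *v y w) $ i * (H *v y w) $ j"
      using vce_x by (auto elim!: eventually_mono)
  qed
  then show ?thesis by (simp add: vec_eq_iff mom_nth mat_expectation_def outer_def)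
qed

lemma meas_affine: "(\<lambda>v. (A *v (H *v v) - v) $ i) \<in> borel_measurable borel"
proof -
  have "(\<lambda>v. (A *v (H *v v) - v) $ i) = (\<lambda>v. ((A ** H - mat 1) *v v) $ i)"
    by (simp add: matrix_vector_mult_diff_rdistrib matrix_vector_mul_assoc)
  then show ?thesis using meas_lin by metis
qed

lemma vce_e: "AE w in M. vec_cond_exp M y (\<lambda>v. A *v (H *v y v + n v) - y v) w = A *v (H *v y w) - y w"
proof -
  have eq: "(\<lambda>v. A *v (H *v y v + n v) - y v) = (\<lambda>v. (A *v (H *v y v) - y v) + A *v n v)"
    by (rule ext) (simp add: matrix_vector_right_distrib algebra_simps)
  have n0': "integral\<^sup>L M (\<lambda>w. (A *v n w) $ i) = 0" for i
  proof -
    interpret prob_space M by (rule P)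
    show ?thesis using vL2_n n0 unfolding vL2_def
      by (simp add: matrix_vector_mult_def L2_integrable)
  qed
  have Gm: "\<forall>i. (\<lambda>w. (A *v (H *v y w) - y w) $ i) \<in> borel_measurable (gen_sigma M y)"
  proof
    fix i show "(\<lambda>w. (A *v (H *v y w) - y w) $ i) \<in> borel_measurable (gen_sigma M y)"
      using meas_gen[OF meas_affine[of A i], of y M] by simp
  qed
  have Nm: "\<forall>i. (\<lambda>w. (A *v n w) $ i) \<in> borel_measurable (gen_sigma M n)"
  proof
    fix i show "(\<lambda>w. (A *v n w) $ i) \<in> borel_measurable (gen_sigma M n)"
      using meas_gen[OF meas_lin[of A i], of n M] by simp
  qed
  show ?thesis unfolding eq
    by (rule VCE[OF Gm _ Nm]) (auto simp: n0' vL2_mv vL2_diff vL2_y vL2_n)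
qed

lemma ip_meas: "vL2 M u \<Longrightarrow> (\<lambda>w. inner (u w) (u w)) \<in> borel_measurable M"
  using ip_integrable by blast

lemma Jform: "bce_objective M lam y (\<lambda>w. H *v y w + n w) A
   = ip M (\<lambda>w. A *v (H *v y w + n w) - y w) (\<lambda>w. A *v (H *v y w + n w) - y w)
     + lam * ip M (\<lambda>w. A *v (H *v y w) - y w) (\<lambda>w. A *v (H *v y w) - y w)"
proof -
  let ?V = "vec_cond_exp M y (\<lambda>v. A *v (H *v y v + n v) - y v)"
  have "integral\<^sup>L M (\<lambda>w. (norm (?V w))\<^sup>2) = integral\<^sup>L M (\<lambda>w. inner (A *v (H *v y w) - y w) (A *v (H *v y w) - y w))"
  proof (rule integral_cong_AE)
    have "(\<lambda>w. (norm (?V w))\<^sup>2) = (\<lambda>w. \<Sum>i\<in>UNIV. ?V w $ i * ?V w $ i)"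
      by (simp add: power2_norm_eq_inner inner_vec_def)
    moreover have "(\<lambda>w. \<Sum>i\<in>UNIV. ?V w $ i * ?V w $ i) \<in> borel_measurable M"
      using vce_comp_meas by measurable
    ultimately show "(\<lambda>w. (norm (?V w))\<^sup>2) \<in> borel_measurable M" by simp
    show "(\<lambda>w. inner (A *v (H *v y w) - y w) (A *v (H *v y w) - y w)) \<in> borel_measurable M"
      by (rule ip_meas) (simp add: vL2_diff vL2_mv vL2_y)
    show "AE w in M. (norm (?V w))\<^sup>2 = inner (A *v (H *v y w) - y w) (A *v (H *v y w) - y w)"
      using vce_e[of A] by (auto elim!: eventually_mono simp: power2_norm_eq_inner)
  qed
  then show ?thesis unfolding bce_objective_def ip_def by (simp add: power2_norm_eq_inner)
qed

end


definition lin :: "real^'m^'d \<Rightarrow> real^'m^'d \<Rightarrow> real" where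
  "lin D X = (\<Sum>i\<in>UNIV. \<Sum>j\<in>UNIV. D $ i $ j * X $ i $ j)"

lemma lin_comb: "lin D X + lam * lin D Y = lin D (X + lam *\<^sub>R Y)"
  unfolding lin_def by (simp add: sum_distrib_left sum.distrib[symmetric] algebra_simps)

lemma lin_zero: "lin D 0 = 0" unfolding lin_def by simp

context bce begin

lemma decomp:
  "bce_objective M lam y (\<lambda>w. H *v y w + n w) (A0 + D)
   = bce_objective M lam y (\<lambda>w. H *v y w + n w) A0
     + 2 * lin D ((A0 ** mom M (\<lambda>w. H *v y w + n w) (\<lambda>w. H *v y w + n w) - mom M y y ** transpose H)
                  + lam *\<^sub>R (A0 ** mom M (\<lambda>w. H *v y w) (\<lambda>w. H *v y w) - mom M y y ** transpose H))
     + (ip M (\<lambda>w. D *v (H *v y w + n w)) (\<lambda>w. D *v (H *v y w + n w))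
        + lam * ip M (\<lambda>w. D *v (H *v y w)) (\<lambda>w. D *v (H *v y w)))"
proof -
  let ?x = "\<lambda>w. H *v y w + n w" and ?z = "\<lambda>w. H *v y w"
  let ?e = "\<lambda>w. A0 *v (H *v y w + n w) - y w" and ?g = "\<lambda>w. A0 *v (H *v y w) - y w"
  have ve: "vL2 M ?e" by (simp add: vL2_diff vL2_mv vL2_x vL2_y)
  have vg: "vL2 M ?g" by (simp add: vL2_diff vL2_mv vL2_z vL2_y)
  have e1: "(\<lambda>w. (A0 + D) *v (H *v y w + n w) - y w) = (\<lambda>w. ?e w + D *v ?x w)"
    by (rule ext) (simp add: matrix_vector_mult_add_rdistrib algebra_simps)
  have g1: "(\<lambda>w. (A0 + D) *v (H *v y w) - y w) = (\<lambda>w. ?g w + D *v ?z w)"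
    by (rule ext) (simp add: matrix_vector_mult_add_rdistrib algebra_simps)
  have me: "mom M ?e ?x = A0 ** mom M ?x ?x - mom M y y ** transpose H"
    using mom_diff_left[OF vL2_mv[OF vL2_x, of A0] vL2_y vL2_x]
    by (simp add: mom_mv_left vL2_x Syx)
  have mg: "mom M ?g ?z = A0 ** mom M ?z ?z - mom M y y ** transpose H"
    using mom_diff_left[OF vL2_mv[OF vL2_z, of A0] vL2_y vL2_z]
    by (simp add: mom_mv_left vL2_z Syz)
  have Ie: "ip M (\<lambda>w. ?e w + D *v ?x w) (\<lambda>w. ?e w + D *v ?x w)
      = ip M ?e ?e + 2 * lin D (mom M ?e ?x) + ip M (\<lambda>w. D *v ?x w) (\<lambda>w. D *v ?x w)"
    using ip_expand[OF ve vL2_mv[OF vL2_x, of D]] ip_mv[OF ve vL2_x, of D] unfolding lin_def by simp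
  have Ig: "ip M (\<lambda>w. ?g w + D *v ?z w) (\<lambda>w. ?g w + D *v ?z w)
      = ip M ?g ?g + 2 * lin D (mom M ?g ?z) + ip M (\<lambda>w. D *v ?z w) (\<lambda>w. D *v ?z w)"
    using ip_expand[OF vg vL2_mv[OF vL2_z, of D]] ip_mv[OF vg vL2_z, of D] unfolding lin_def by simp
  show ?thesis
    unfolding Jform e1 g1 Ie Ig me[symmetric] mg[symmetric] lin_comb[symmetric]
    by (simp add: algebra_simps)
qed

theorem part1:
  assumes lam: "lam \<ge> 0"
    and iMc: "invertible Mc"
    and Mc: "Mc = (1 / (lam + 1)) *\<^sub>R mom M (\<lambda>w. H *v y w + n w) (\<lambda>w. H *v y w + n w)
               + (lam / (lam + 1)) *\<^sub>R mom M (\<lambda>w. H *v y w) (\<lambda>w. H *v y w)"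
  shows "(\<forall>B. bce_objective M lam y (\<lambda>w. H *v y w + n w) A
                    \<le> bce_objective M lam y (\<lambda>w. H *v y w + n w) B)
         \<longleftrightarrow> A = mom M y (\<lambda>w. H *v y w + n w) ** matrix_inv Mc"
proof -
  let ?J = "bce_objective M lam y (\<lambda>w. H *v y w + n w)"
  let ?A0 = "mom M y (\<lambda>w. H *v y w + n w) ** matrix_inv Mc"
  let ?Q = "\<lambda>D. ip M (\<lambda>w. D *v (H *v y w + n w)) (\<lambda>w. D *v (H *v y w + n w))
        + lam * ip M (\<lambda>w. D *v (H *v y w)) (\<lambda>w. D *v (H *v y w))"
  have br: "(?A0 ** mom M (\<lambda>w. H *v y w + n w) (\<lambda>w. H *v y w + n w) - mom M y y ** transpose H)
                  + lam *\<^sub>R (?A0 ** mom M (\<lambda>w. H *v y w) (\<lambda>w. H *v y w) - mom M y y ** transpose H) = 0"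
    using bracket0[OF iMc Mc lam] unfolding Syx .
  have dec: "?J (?A0 + D) = ?J ?A0 + ?Q D" for D
    using decomp[of lam "?A0" D] unfolding br lin_zero by simp
  have Qnn: "?Q D \<ge> 0" for D using lam by (simp add: ip_nonneg)
  show ?thesis
  proof
    assume min: "\<forall>B. ?J A \<le> ?J B"
    define D where "D = A - ?A0"
    have AD: "A = ?A0 + D" unfolding D_def by simp
    have "?J (?A0 + D) \<le> ?J ?A0" using min AD by auto
    then have "?Q D \<le> 0" using dec[of D] by simp
    then have q0: "?Q D = 0" using Qnn[of D] by simp
    have p1: "ip M (\<lambda>w. D *v (H *v y w + n w)) (\<lambda>w. D *v (H *v y w + n w)) \<ge> 0" by (rule ip_nonneg)
    have p2: "lam * ip M (\<lambda>w. D *v (H *v y w)) (\<lambda>w. D *v (H *v y w)) \<ge> 0" using lam by (simp add: ip_nonneg)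
    have z1: "ip M (\<lambda>w. D *v (H *v y w + n w)) (\<lambda>w. D *v (H *v y w + n w)) = 0" using q0 p1 p2 by linarith
    have z2: "lam * ip M (\<lambda>w. D *v (H *v y w)) (\<lambda>w. D *v (H *v y w)) = 0" using q0 p1 p2 by linarith
    have "D ** mom M (\<lambda>w. H *v y w + n w) (\<lambda>w. H *v y w + n w) = 0"
      using ip_zero[OF vL2_mv[OF vL2_x] vL2_x z1] by (simp add: mom_mv_left vL2_x)
    moreover have "lam = 0 \<or> D ** mom M (\<lambda>w. H *v y w) (\<lambda>w. H *v y w) = 0"
    proof (cases "lam = 0")
      case False
      then have "ip M (\<lambda>w. D *v (H *v y w)) (\<lambda>w. D *v (H *v y w)) = 0" using z2 by simp
      then have "mom M (\<lambda>w. D *v (H *v y w)) (\<lambda>w. H *v y w) = 0"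
        using ip_zero[OF vL2_mv[OF vL2_z, of D] vL2_z] by blast
      then show ?thesis by (simp add: mom_mv_left vL2_z)
    qed simp
    ultimately have "D = 0" by (rule D_zero[OF iMc Mc])
    then show "A = ?A0" using AD by simp
  next
    assume "A = ?A0"
    show "\<forall>B. ?J A \<le> ?J B"
    proof
      fix B
      have "?J B = ?J ?A0 + ?Q (B - ?A0)" using dec[of "B - ?A0"] by simp
      then show "?J A \<le> ?J B" using Qnn[of "B - ?A0"] \<open>A = ?A0\<close> by simp
    qed
  qed
qed

end


theorem theorem2:
  fixes M :: "'a measure" and H :: "real^'d^'m"
    and y :: "'a \<Rightarrow> real^'d" and n :: "'a \<Rightarrow> real^'m" and lam :: real
  assumes "prob_space M"
    and "y \<in> borel_measurable M" and "n \<in> borel_measurable M"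
    and "prob_space.indep_set M (sets (gen_sigma M y)) (sets (gen_sigma M n))"
    and "integrable M (\<lambda>w. (norm (y w))\<^sup>2)"
    and "integrable M (\<lambda>w. (norm (n w))\<^sup>2)"
    and "\<forall>i. integral\<^sup>L M (\<lambda>w. n w $ i) = 0"
    and "lam \<ge> 0"
    and "invertible (mat_expectation M (\<lambda>w. outer (n w) (n w)))"
    and "invertible (mat_expectation M (\<lambda>w. outer (y w) (y w)))"
    and "invertible ((1 / (lam + 1)) *\<^sub>R mat_expectation M (\<lambda>w. outer (H *v y w + n w) (H *v y w + n w))
              + (lam / (lam + 1)) *\<^sub>R mat_expectation M (\<lambda>w.
                  outer (vec_cond_exp M y (\<lambda>v. H *v y v + n v) w) (vec_cond_exp M y (\<lambda>v. H *v y v + n v) w)))"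
    and "invertible (transpose H ** matrix_inv (mat_expectation M (\<lambda>w. outer (n w) (n w))) ** H
              + (1 / (lam + 1)) *\<^sub>R matrix_inv (mat_expectation M (\<lambda>w. outer (y w) (y w))))"
  shows "(\<forall>A. (\<forall>B. bce_objective M lam y (\<lambda>w. H *v y w + n w) A
                    \<le> bce_objective M lam y (\<lambda>w. H *v y w + n w) B)
             \<longleftrightarrow> A = mat_expectation M (\<lambda>w. outer (y w) (H *v y w + n w))
                    ** matrix_inv ((1 / (lam + 1)) *\<^sub>R mat_expectation M (\<lambda>w. outer (H *v y w + n w) (H *v y w + n w))
                       + (lam / (lam + 1)) *\<^sub>R mat_expectation M (\<lambda>w.
                          outer (vec_cond_exp M y (\<lambda>v. H *v y v + n v) w) (vec_cond_exp M y (\<lambda>v. H *v y v + n v) w))))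
         \<and> mat_expectation M (\<lambda>w. outer (y w) (H *v y w + n w))
                    ** matrix_inv ((1 / (lam + 1)) *\<^sub>R mat_expectation M (\<lambda>w. outer (H *v y w + n w) (H *v y w + n w))
                       + (lam / (lam + 1)) *\<^sub>R mat_expectation M (\<lambda>w.
                          outer (vec_cond_exp M y (\<lambda>v. H *v y v + n v) w) (vec_cond_exp M y (\<lambda>v. H *v y v + n v) w)))
           = matrix_inv (transpose H ** matrix_inv (mat_expectation M (\<lambda>w. outer (n w) (n w))) ** H
                + (1 / (lam + 1)) *\<^sub>R matrix_inv (mat_expectation M (\<lambda>w. outer (y w) (y w))))
             ** transpose H ** matrix_inv (mat_expectation M (\<lambda>w. outer (n w) (n w)))"
proof -
  interpret bce M H y n by (rule bce.intro[OF assms(1-7)])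
  have lam: "lam \<ge> 0" by (rule assms(8))
  let ?Mc = "(1 / (lam + 1)) *\<^sub>R mat_expectation M (\<lambda>w. outer (H *v y w + n w) (H *v y w + n w))
              + (lam / (lam + 1)) *\<^sub>R mat_expectation M (\<lambda>w.
                  outer (vec_cond_exp M y (\<lambda>v. H *v y v + n v) w) (vec_cond_exp M y (\<lambda>v. H *v y v + n v) w))"
  have iMc: "invertible ?Mc" by (rule assms(11))
  have McE: "?Mc = (1 / (lam + 1)) *\<^sub>R mom M (\<lambda>w. H *v y w + n w) (\<lambda>w. H *v y w + n w)
               + (lam / (lam + 1)) *\<^sub>R mom M (\<lambda>w. H *v y w) (\<lambda>w. H *v y w)"
    unfolding R by (simp add: mom_def)
  have SyxE: "mat_expectation M (\<lambda>w. outer (y w) (H *v y w + n w)) = mom M y (\<lambda>w. H *v y w + n w)"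
    by (simp add: mom_def)
  have P1: "\<forall>A. (\<forall>B. bce_objective M lam y (\<lambda>w. H *v y w + n w) A
                    \<le> bce_objective M lam y (\<lambda>w. H *v y w + n w) B)
             \<longleftrightarrow> A = mat_expectation M (\<lambda>w. outer (y w) (H *v y w + n w)) ** matrix_inv ?Mc"
    unfolding SyxE using part1[OF lam iMc McE] by blast
  have c1: "1 / (lam + 1) + lam / (lam + 1) = 1" using lam by (simp add: add_divide_distrib[symmetric])
  have "?Mc = (1 / (lam + 1)) *\<^sub>R (H ** mom M y y ** transpose H + mom M n n)
               + (lam / (lam + 1)) *\<^sub>R (H ** mom M y y ** transpose H)"
    unfolding McE Sx Sz ..
  also have "\<dots> = (1 / (lam + 1) + lam / (lam + 1)) *\<^sub>R (H ** mom M y y ** transpose H) + (1 / (lam + 1)) *\<^sub>R mom M n n"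
    by (simp add: scaleR_add_right scaleR_add_left)
  also have "\<dots> = H ** mom M y y ** transpose H + (1 / (lam + 1)) *\<^sub>R mom M n n"
    unfolding c1 by simp
  finally have Mc2: "?Mc = H ** mat_expectation M (\<lambda>w. outer (y w) (y w)) ** transpose H
      + (1 / (lam + 1)) *\<^sub>R mat_expectation M (\<lambda>w. outer (n w) (n w))"
    by (simp add: mom_def)
  have P2: "mat_expectation M (\<lambda>w. outer (y w) (H *v y w + n w)) ** matrix_inv ?Mc
     = matrix_inv (transpose H ** matrix_inv (mat_expectation M (\<lambda>w. outer (n w) (n w))) ** H
                + (1 / (lam + 1)) *\<^sub>R matrix_inv (mat_expectation M (\<lambda>w. outer (y w) (y w))))
             ** transpose H ** matrix_inv (mat_expectation M (\<lambda>w. outer (n w) (n w)))"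
    unfolding SyxE Syx using push[OF assms(9) assms(10) iMc assms(12) Mc2 refl]
    by (simp add: mom_def)
  show ?thesis using P1 P2 by blast
qed


end
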